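(* Let $G$ be a finite connected $k$-regular simple graph on $n\ge 2$ vertices, and let $\mu_1$ be the second largest eigenvalue of its adjacency matrix. Then $$k-\mu_1 < 2k\,\lambda(G)\sqrt{\frac{n}{\lfloor n/2\rfloor}}.$$
   Context: The eigenvalues of the adjacency matrix of $G$ are listed as $\mu_0\ge\mu_1\ge\cdots\ge\mu_{n-1}$ (so $\mu_0=k$ for connected $k$-regular $G$). An $L(2,1)$-colouring of $G$ is a map $f:V\to\mathbb{Z}_{\ge 0}$ with $|f(u)-f(v)|\ge 2$ whenever $u,v$ are adjacent and $|f(u)-f(v)|\ge 1$ whenever $u,v$ are at distance two. Its span is $\max f-\min f$, and $\lambda(G)$ denotes the minimum span over all $L(2,1)$-colourings of $G$. *)

theory Defs
  imports Complex_Main "Jordan_Normal_Form.Char_Poly"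
begin

text \<open>A finite simple graph on the vertex set {0..<n}, given by an edge relation E
  (only pairs of vertices below n are relevant).\<close>

definition simple_graph :: "nat \<Rightarrow> (nat \<Rightarrow> nat \<Rightarrow> bool) \<Rightarrow> bool" where
  "simple_graph n E \<longleftrightarrow> (\<forall>u<n. \<forall>v<n. E u v \<longleftrightarrow> E v u) \<and> (\<forall>u<n. \<not> E u u)"

definition neighbours :: "nat \<Rightarrow> (nat \<Rightarrow> nat \<Rightarrow> bool) \<Rightarrow> nat \<Rightarrow> nat set" where
  "neighbours n E u = {v. v < n \<and> E u v}"

definition regular_graph :: "nat \<Rightarrow> (nat \<Rightarrow> nat \<Rightarrow> bool) \<Rightarrow> nat \<Rightarrow> bool" where
  "regular_graph n E k \<longleftrightarrow> (\<forall>u<n. card (neighbours n E u) = k)"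

definition connected_graph :: "nat \<Rightarrow> (nat \<Rightarrow> nat \<Rightarrow> bool) \<Rightarrow> bool" where
  "connected_graph n E \<longleftrightarrow>
     (\<forall>u<n. \<forall>v<n. (\<lambda>x y. x < n \<and> y < n \<and> E x y)\<^sup>*\<^sup>* u v)"

definition dist_two :: "nat \<Rightarrow> (nat \<Rightarrow> nat \<Rightarrow> bool) \<Rightarrow> nat \<Rightarrow> nat \<Rightarrow> bool" where
  "dist_two n E u v \<longleftrightarrow> u \<noteq> v \<and> \<not> E u v \<and> (\<exists>w<n. E u w \<and> E w v)"

definition L21_colouring :: "nat \<Rightarrow> (nat \<Rightarrow> nat \<Rightarrow> bool) \<Rightarrow> (nat \<Rightarrow> nat) \<Rightarrow> bool" where
  "L21_colouring n E f \<longleftrightarrow>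
     (\<forall>u<n. \<forall>v<n. E u v \<longrightarrow> \<bar>int (f u) - int (f v)\<bar> \<ge> 2) \<and>
     (\<forall>u<n. \<forall>v<n. dist_two n E u v \<longrightarrow> \<bar>int (f u) - int (f v)\<bar> \<ge> 1)"

definition colouring_span :: "nat \<Rightarrow> (nat \<Rightarrow> nat) \<Rightarrow> nat" where
  "colouring_span n f = Max (f ` {0..<n}) - Min (f ` {0..<n})"

definition lambda21 :: "nat \<Rightarrow> (nat \<Rightarrow> nat \<Rightarrow> bool) \<Rightarrow> nat" where
  "lambda21 n E = (LEAST s. \<exists>f. L21_colouring n E f \<and> colouring_span n f = s)"

definition adj_matrix :: "nat \<Rightarrow> (nat \<Rightarrow> nat \<Rightarrow> bool) \<Rightarrow> real mat" where
  "adj_matrix n E = mat n n (\<lambda>(i, j). if E i j then 1 else 0)"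

definition eigenvalues_desc :: "real mat \<Rightarrow> real list" where
  "eigenvalues_desc A = (THE es. sorted_wrt (\<ge>) es \<and>
      char_poly A = prod_list (map (\<lambda>a. [:- a, 1:]) es))"

end

theory Submission
  imports Defs
begin
lemma real_eig:
  fixes A :: "real mat"
  assumes A: "A \<in> carrier_mat n n"
    and sym: "\<And>i j. i < n \<Longrightarrow> j < n \<Longrightarrow> A $$ (i,j) = A $$ (j,i)"
    and root: "poly (char_poly (map_mat complex_of_real A)) a = 0"
  shows "Im a = 0"
proof -
  let ?B = "map_mat complex_of_real A"
  have B: "?B \<in> carrier_mat n n" using A by auto
  have "eigenvalue ?B a" using eigenvalue_root_char_poly[OF B] root by simp
  then obtain v where ev: "eigenvector ?B v a" unfolding eigenvalue_def by auto
  hence v: "v \<in> carrier_vec n" "v \<noteq> 0\<^sub>v n" "?B *\<^sub>v v = a \<cdot>\<^sub>v v"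
    unfolding eigenvector_def using B by auto
  have comp: "(\<Sum>j<n. complex_of_real (A $$ (i,j)) * v $ j) = a * v $ i" if "i < n" for i
  proof -
    have "(?B *\<^sub>v v) $ i = a * v $ i" using v(3) that v(1) by simp
    moreover have "(?B *\<^sub>v v) $ i = (\<Sum>j<n. complex_of_real (A $$ (i,j)) * v $ j)"
      using that A v(1) by (auto simp: scalar_prod_def lessThan_atLeast0 intro!: sum.cong)
    ultimately show ?thesis by simp
  qed
  define N where "N = (\<Sum>i<n. cnj (v $ i) * v $ i)"
  define S where "S = (\<Sum>i<n. \<Sum>j<n. cnj (v $ i) * complex_of_real (A $$ (i,j)) * v $ j)"
  have S1: "S = a * N"
    unfolding S_def N_def sum_distrib_left
  proof (rule sum.cong[OF refl])
    fix i assume "i \<in> {..<n}"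
    hence "(\<Sum>j<n. cnj (v $ i) * complex_of_real (A $$ (i,j)) * v $ j)
        = cnj (v $ i) * (\<Sum>j<n. complex_of_real (A $$ (i,j)) * v $ j)"
      by (simp add: sum_distrib_left mult.assoc)
    also have "\<dots> = a * (cnj (v $ i) * v $ i)" using comp \<open>i \<in> {..<n}\<close> by simp
    finally show "(\<Sum>j<n. cnj (v $ i) * complex_of_real (A $$ (i,j)) * v $ j) = a * (cnj (v $ i) * v $ i)" .
  qed
  have "cnj S = (\<Sum>i<n. \<Sum>j<n. v $ i * complex_of_real (A $$ (i,j)) * cnj (v $ j))"
    unfolding S_def by (simp add: cnj_sum)
  also have "\<dots> = (\<Sum>j<n. \<Sum>i<n. v $ i * complex_of_real (A $$ (i,j)) * cnj (v $ j))"
    by (rule sum.swap)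
  also have "\<dots> = S" unfolding S_def
    by (intro sum.cong refl, simp add: sym mult.commute mult.left_commute)
  finally have S2: "cnj S = S" .
  have Nreal: "N = complex_of_real (\<Sum>i<n. (cmod (v $ i))\<^sup>2)"
    unfolding N_def of_real_sum by (intro sum.cong refl, metis complex_norm_square mult.commute of_real_power)
  obtain i where i: "i < n" "v $ i \<noteq> 0" using v(1,2) by (metis vec_eq_iff carrier_vecD index_zero_vec(1,2))
  have "(\<Sum>i<n. (cmod (v $ i))\<^sup>2) > 0"
  proof -
    have "(\<Sum>i<n. (cmod (v $ i))\<^sup>2) \<ge> (cmod (v $ i))\<^sup>2"
      using i by (intro member_le_sum) auto
    moreover have "(cmod (v $ i))\<^sup>2 > 0" using i by simp
    ultimately show ?thesis by linarith
  qed
  then obtain r where r: "r > 0" "N = complex_of_real r" using Nreal by blast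
  from S1 S2 have "cnj a * N = a * N" using r by simp
  hence "cnj a = a" using r by simp
  thus ?thesis by (metis Reals_cnj_iff complex_is_Real_iff)
qed


lemma prod_list_mset_eq:
  fixes f :: "'a \<Rightarrow> 'b::comm_monoid_mult"
  assumes "mset xs = mset ys"
  shows "prod_list (map f xs) = prod_list (map f ys)"
proof -
  have "prod_list (map f xs) = prod_mset (mset (map f xs))" by (simp only: prod_mset_prod_list)
  also have "\<dots> = prod_mset (image_mset f (mset xs))" by (simp only: mset_map)
  also have "\<dots> = prod_mset (image_mset f (mset ys))" by (simp only: assms)
  also have "\<dots> = prod_mset (mset (map f ys))" by (simp only: mset_map)
  also have "\<dots> = prod_list (map f ys)" by (simp only: prod_mset_prod_list)
  finally show ?thesis .
qed

lemma lin_prod_mset: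
  fixes xs ys :: "real list"
  assumes "prod_list (map (\<lambda>a. [:- a, 1:]) xs) = prod_list (map (\<lambda>a. [:- a, 1:]) ys)"
  shows "mset xs = mset ys"
  using assms
proof (induction xs arbitrary: ys)
  case Nil
  hence "degree (prod_list (map (\<lambda>a. [:- a, 1:]) ys)) = 0" by simp
  hence "length ys = 0" using degree_linear_factors[of uminus ys] by simp
  thus ?case by simp
next
  case (Cons x xs)
  let ?P = "\<lambda>zs. prod_list (map (\<lambda>a. [:- a, 1:]) (zs::real list))"
  have "poly (?P (x # xs)) x = 0" by (simp add: poly_prod_list)
  hence "poly (?P ys) x = 0" by (simp only: Cons.prems)
  hence "prod_list (map (\<lambda>p. poly p x) (map (\<lambda>a. [:- a, 1:]) ys)) = 0"
    by (simp only: poly_prod_list)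
  hence "0 \<in> set (map (\<lambda>p. poly p x) (map (\<lambda>a. [:- a, 1:]) ys))"
    by (simp only: prod_list_zero_iff)
  hence "x \<in> set ys" by auto
  hence m: "mset ys = mset (x # remove1 x ys)" by (simp add: insert_DiffM)
  have eq: "?P ys = ?P (x # remove1 x ys)"
    using m by (rule prod_list_mset_eq)
  have "?P (x # xs) = ?P (x # remove1 x ys)" using Cons.prems eq by (rule trans)
  hence c: "[:- x, 1:] * ?P xs = [:- x, 1:] * ?P (remove1 x ys)"
    by (simp only: list.map prod_list.Cons)
  have nz: "[:- x, 1:] \<noteq> (0::real poly)" by simp
  from c have "?P xs = ?P (remove1 x ys)" by (simp only: mult_left_cancel[OF nz])
  from Cons.IH[OF this] m show ?case by (simp only: mset.simps)
qed

lemma real_split: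
  fixes A :: "real mat"
  assumes A: "A \<in> carrier_mat n n"
    and sym: "\<And>i j. i < n \<Longrightarrow> j < n \<Longrightarrow> A $$ (i,j) = A $$ (j,i)"
  shows "\<exists>rs. char_poly A = prod_list (map (\<lambda>a. [:- a, 1:]) rs)"
proof -
  let ?B = "map_mat complex_of_real A"
  have B: "?B \<in> carrier_mat n n" using A by auto
  obtain as where as: "char_poly ?B = (\<Prod>a\<leftarrow>as. [:- a, 1:])"
    using char_poly_factorized[OF B] by auto
  have re: "a = complex_of_real (Re a)" if "a \<in> set as" for a
  proof -
    have "poly (char_poly ?B) a = 0" using that unfolding as
      by (auto simp: poly_prod_list prod_list_zero_iff)
    from real_eig[OF A sym this] show ?thesis by (simp add: complex_eq_iff)
  qed
  hence asr: "as = map complex_of_real (map Re as)" by (simp add: map_idI)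
  interpret mph: map_poly_inj_idom_hom "of_real :: real \<Rightarrow> complex" ..
  have mp: "map_poly complex_of_real (\<Prod>a\<leftarrow>rs. [:- a, 1:]) = (\<Prod>a\<leftarrow>map complex_of_real rs. [:- a, 1:])" for rs :: "real list"
  proof (induction rs)
    case (Cons r rs)
    have "map_poly complex_of_real [:- r, 1:] = [:- complex_of_real r, 1:]" by simp
    thus ?case by (simp only: list.map prod_list.Cons mph.hom_mult Cons.IH)
  qed simp
  have "char_poly ?B = map_poly complex_of_real (char_poly A)"
    by (rule of_real_hom.char_poly_hom[OF A])
  hence "map_poly complex_of_real (char_poly A) = char_poly ?B" by simp
  also have "\<dots> = map_poly complex_of_real (\<Prod>a\<leftarrow>map Re as. [:- a, 1:])"
    unfolding as mp by (simp only: asr[symmetric])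
  finally have "char_poly A = (\<Prod>a\<leftarrow>map Re as. [:- a, 1:])" by (simp only: mph.eq_iff)
  thus ?thesis by blast
qed


lemma eigenvalues_desc_prop:
  fixes A :: "real mat"
  assumes A: "A \<in> carrier_mat n n"
    and sym: "\<And>i j. i < n \<Longrightarrow> j < n \<Longrightarrow> A $$ (i,j) = A $$ (j,i)"
  shows "char_poly A = prod_list (map (\<lambda>a. [:- a, 1:]) (eigenvalues_desc A))"
proof -
  let ?P = "\<lambda>es. sorted_wrt (\<ge>) es \<and> char_poly A = prod_list (map (\<lambda>a. [:- a, 1:]) es)"
  obtain rs where rs: "char_poly A = prod_list (map (\<lambda>a. [:- a, 1:]) rs)"
    using real_split[OF A sym] by blast
  define es where "es = rev (sort rs)"
  have "prod_list (map (\<lambda>a. [:- a, 1:]) es) = prod_list (map (\<lambda>a. [:- a, 1:]) rs)"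
    by (rule prod_list_mset_eq) (simp add: es_def)
  hence P: "?P es" using rs unfolding es_def by (simp add: sorted_wrt_rev)
  have uniq: "x = es" if "?P x" for x
  proof -
    have "mset x = mset es" using that P by (intro lin_prod_mset) simp
    hence m: "mset (rev x) = mset (rev es)" by simp
    have s1: "sorted (rev x)" "sorted (rev es)" using that P by (simp_all add: sorted_wrt_rev)
    have e1: "sort (rev es) = rev x" using properties_for_sort[of "rev x" "rev es"] m s1(1) by blast
    have e2: "sort (rev es) = rev es" using properties_for_sort[of "rev es" "rev es"] s1(2) by blast
    have "rev x = rev es" using e1 e2 by simp
    thus ?thesis by simp
  qed
  have "?P (eigenvalues_desc A)" unfolding eigenvalues_desc_def
    by (rule theI[of ?P es], rule P, rule uniq)
  thus ?thesis by simp
qed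

lemma eig_bound:
  fixes A :: "real mat" and k :: nat
  assumes A: "A \<in> carrier_mat n n"
    and nonneg: "\<And>i j. i < n \<Longrightarrow> j < n \<Longrightarrow> A $$ (i,j) \<ge> 0"
    and rows: "\<And>i. i < n \<Longrightarrow> (\<Sum>j<n. A $$ (i,j)) = real k"
    and root: "poly (char_poly A) r = 0"
  shows "\<bar>r\<bar> \<le> real k"
proof -
  have "eigenvalue A r" using eigenvalue_root_char_poly[OF A] root by simp
  then obtain v where ev: "eigenvector A v r" unfolding eigenvalue_def by auto
  hence v: "v \<in> carrier_vec n" "v \<noteq> 0\<^sub>v n" "A *\<^sub>v v = r \<cdot>\<^sub>v v"
    unfolding eigenvector_def using A by auto
  have comp: "(\<Sum>j<n. A $$ (i,j) * v $ j) = r * v $ i" if "i < n" for i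
  proof -
    have "(A *\<^sub>v v) $ i = r * v $ i" using v(3) that v(1) by simp
    moreover have "(A *\<^sub>v v) $ i = (\<Sum>j<n. A $$ (i,j) * v $ j)"
      using that A v(1) by (auto simp: scalar_prod_def lessThan_atLeast0 intro!: sum.cong)
    ultimately show ?thesis by simp
  qed
  obtain i0 where i0: "i0 < n" "v $ i0 \<noteq> 0" using v(1,2) by (metis vec_eq_iff carrier_vecD index_zero_vec(1,2))
  define m where "m = Max ((\<lambda>j. \<bar>v $ j\<bar>) ` {..<n})"
  have fin: "finite ((\<lambda>j. \<bar>v $ j\<bar>) ` {..<n})" "(\<lambda>j. \<bar>v $ j\<bar>) ` {..<n} \<noteq> {}" using i0 by auto
  obtain i where i: "i < n" "\<bar>v $ i\<bar> = m" using Max_in[OF fin] unfolding m_def by auto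
  have le: "\<bar>v $ j\<bar> \<le> m" if "j < n" for j unfolding m_def using fin that by auto
  have mpos: "m > 0" using le[OF i0(1)] i0(2) by simp
  have "\<bar>r\<bar> * m = \<bar>\<Sum>j<n. A $$ (i,j) * v $ j\<bar>" using comp[OF i(1)] i(2) by (simp add: abs_mult)
  also have "\<dots> \<le> (\<Sum>j<n. \<bar>A $$ (i,j) * v $ j\<bar>)" by (rule sum_abs)
  also have "\<dots> \<le> (\<Sum>j<n. A $$ (i,j) * m)"
    by (intro sum_mono) (simp add: abs_mult nonneg i(1) le mult_left_mono)
  also have "\<dots> = real k * m" using rows[OF i(1)] by (simp add: sum_distrib_right[symmetric])
  finally show ?thesis using mpos by simp
qed


theorem corollary2p3:
  fixes n k :: nat and E :: "nat \<Rightarrow> nat \<Rightarrow> bool"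
  assumes "n \<ge> 2"
    and "simple_graph n E"
    and "connected_graph n E"
    and "regular_graph n E k"
  shows "real k - eigenvalues_desc (adj_matrix n E) ! 1
           < 2 * real k * real (lambda21 n E) * sqrt (real n / real (n div 2))"
proof -
  note n2 = assms(1)
  have symE: "\<And>u v. u < n \<Longrightarrow> v < n \<Longrightarrow> E u v \<longleftrightarrow> E v u" and irr: "\<And>u. u < n \<Longrightarrow> \<not> E u u"
    using assms(2) unfolding simple_graph_def by auto
  have reg: "\<And>u. u < n \<Longrightarrow> card (neighbours n E u) = k"
    using assms(4) unfolding regular_graph_def by auto
  let ?A = "adj_matrix n E"
  have A: "?A \<in> carrier_mat n n" by (simp add: adj_matrix_def)
  have ent: "\<And>i j. i < n \<Longrightarrow> j < n \<Longrightarrow> ?A $$ (i,j) = (if E i j then 1 else 0)"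
    by (simp add: adj_matrix_def)
  have sym: "\<And>i j. i < n \<Longrightarrow> j < n \<Longrightarrow> ?A $$ (i,j) = ?A $$ (j,i)"
    using ent symE by simp
  have nonneg: "\<And>i j. i < n \<Longrightarrow> j < n \<Longrightarrow> ?A $$ (i,j) \<ge> 0" using ent by simp
  have rows: "(\<Sum>j<n. ?A $$ (i,j)) = real k" if i: "i < n" for i
  proof -
    have "(\<Sum>j<n. ?A $$ (i,j)) = (\<Sum>j<n. if E i j then 1 else 0)"
      using ent i by (intro sum.cong) auto
    also have "\<dots> = real (card ({..<n} \<inter> Collect (E i)))"
      by (simp add: sum.If_cases)
    also have "{..<n} \<inter> Collect (E i) = neighbours n E i" unfolding neighbours_def by auto
    finally show ?thesis using reg[OF i] by simp
  qed
  define es where "es = eigenvalues_desc ?A"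
  have cp: "char_poly ?A = prod_list (map (\<lambda>a. [:- a, 1:]) es)"
    unfolding es_def by (rule eigenvalues_desc_prop[OF A sym])
  have "length es = n"
    using degree_linear_factors[of uminus es] degree_monic_char_poly[OF A] cp by simp
  hence mem: "es ! 1 \<in> set es" using n2 by simp
  have "poly (char_poly ?A) (es ! 1) = 0" unfolding cp using mem
    by (auto simp: poly_prod_list prod_list_zero_iff)
  from eig_bound[OF A nonneg rows this] have mu: "real k - es ! 1 \<le> 2 * real k" by simp
  have c: "\<forall>u<n. \<forall>v<n. (\<lambda>x y. x < n \<and> y < n \<and> E x y)\<^sup>*\<^sup>* u v"
    using assms(3) unfolding connected_graph_def .
  have h0: "0 < n" "1 < n" using n2 by auto
  have "(\<lambda>x y. x < n \<and> y < n \<and> E x y)\<^sup>*\<^sup>* 0 1"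
    using c[rule_format, OF h0(1) h0(2)] .
  then have "\<exists>y<n. E 0 y"
  proof (rule converse_rtranclpE)
    assume "(0::nat) = 1" thus ?thesis by simp
  next
    fix y assume a: "0 < n \<and> y < n \<and> E 0 y"
    thus ?thesis by blast
  qed
  then obtain y where y: "y < n" "E 0 y" by blast
  have "y \<in> neighbours n E 0" using y unfolding neighbours_def by auto
  moreover have "finite (neighbours n E 0)" unfolding neighbours_def by simp
  ultimately have "card (neighbours n E 0) \<ge> 1"
    by (metis One_nat_def Suc_leI card_gt_0_iff empty_iff)
  hence kpos: "real k \<ge> 1" using reg[of 0] n2 by simp
  have col: "L21_colouring n E (\<lambda>u. 2 * u)"
    unfolding L21_colouring_def dist_two_def
  proof (intro conjI allI impI)
    fix u v assume "u < n" "v < n" "E u v"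
    hence "u \<noteq> v" using irr by auto
    thus "\<bar>int (2 * u) - int (2 * v)\<bar> \<ge> 2" by linarith
  next
    fix u v assume "u < n" "v < n" "u \<noteq> v \<and> \<not> E u v \<and> (\<exists>w<n. E u w \<and> E w v)"
    thus "\<bar>int (2 * u) - int (2 * v)\<bar> \<ge> 1" by linarith
  qed
  have "\<exists>s f. L21_colouring n E f \<and> colouring_span n f = s" using col by blast
  hence "\<exists>f. L21_colouring n E f \<and> colouring_span n f = lambda21 n E"
    unfolding lambda21_def by (rule LeastI_ex)
  then obtain g where g: "L21_colouring n E g" "colouring_span n g = lambda21 n E" by blast
  have gd: "\<bar>int (g 0) - int (g y)\<bar> \<ge> 2" using g(1) y n2 unfolding L21_colouring_def by auto
  have fin: "finite (g ` {0..<n})" by simp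
  have "g 0 \<le> Max (g ` {0..<n})" "g y \<le> Max (g ` {0..<n})"
    "Min (g ` {0..<n}) \<le> g 0" "Min (g ` {0..<n}) \<le> g y" using y n2 fin by auto
  hence "colouring_span n g \<ge> 2" unfolding colouring_span_def using gd by linarith
  hence lam: "real (lambda21 n E) \<ge> 1" using g(2) by simp
  have h: "n div 2 \<ge> 1" using n2 by simp
  have "real n \<ge> 2 * real (n div 2)" by linarith
  hence "real n / real (n div 2) \<ge> 2" using h by (simp add: field_simps)
  hence sq: "sqrt (real n / real (n div 2)) > 1" by (simp add: real_less_rsqrt)
  have "real (lambda21 n E) * sqrt (real n / real (n div 2)) > 1"
  proof -
    have gen: "\<And>l t::real. l \<ge> 1 \<Longrightarrow> t > 1 \<Longrightarrow> l * t > 1"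
    proof -
      fix l t :: real assume "l \<ge> 1" "t > 1"
      hence "1 * t \<le> l * t" by (intro mult_right_mono) auto
      thus "l * t > 1" using \<open>t > 1\<close> by linarith
    qed
    show ?thesis by (rule gen[OF lam sq])
  qed
  hence "2 * real k < 2 * real k * (real (lambda21 n E) * sqrt (real n / real (n div 2)))"
    using kpos by simp
  thus ?thesis using mu unfolding es_def by (simp add: mult.assoc)
qed

end
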